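(* Let $V$ be a real Hilbert space, $\mathcal D$ a dictionary, $V_n\subset V$ a subspace of dimension $n$ with orthonormal basis $(\phi_1,\dots,\phi_n)$, and $\kappa\in(0,1)$. Let $(W_m)_{m\ge0}$ be generated by the worst case OMP algorithm with parameter $\kappa$. If $J(V_n)<\infty$, then $$r_m\le\frac{n^2J(V_n)^2}{\kappa^2}(m+1)^{-1}\qquad\text{for all }m\ge0.$$
   Context: A dictionary is a set $\mathcal D\subset V$ of elements with $\|\omega\|=1$ for all $\omega\in\mathcal D$ whose finite linear combinations are dense in $V$. Worst case OMP: $W_0=\{0\}$; for $k\ge1$, take $v_k\in\operatorname{argmax}\{\|v-P_{W_{k-1}}v\|: v\in V_n,\ \|v\|=1\}$, then choose $\omega_k\in\mathcal D$ with $|\langle v_k-P_{W_{k-1}}v_k,\omega_k\rangle|\ge\kappa\sup_{\omega\in\mathcal D}|\langle v_k-P_{W_{k-1}}v_k,\omega\rangle|$, and set $W_k=\operatorname{span}\{\omega_1,\dots,\omega_k\}$ ($P_X$ is the orthogonal projection onto $X$). The residual is $r_m=\sum_{i=1}^n\|\phi_i-P_{W_m}\phi_i\|^2$. For $\Psi\in V^n$, $\|\Psi\|_{\ell^1(\mathcal D)}=\inf\{\sum_{\omega\in\mathcal D}\|c_\omega\|_2:\psi_i=\sum_{\omega\in\mathcal D}c_{\omega,i}\,\omega,\ i=1,\dots,n\}$ with $c_\omega\in\mathbb R^n$ (countably many nonzero; infimum of the empty set is $+\infty$), and $J(V_n)=\|(\phi_1,\dots,\phi_n)\|_{\ell^1(\mathcal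 D)}$ for an orthonormal basis of $V_n$ (independent of the choice of basis). *)

theory Defs
  imports "HOL-Analysis.Analysis"
begin

text \<open>Orthogonal projection onto a subspace W (well defined for the finite-dimensional
  subspaces W_k used below): the unique p in W with v - p orthogonal to W.\<close>
definition proj :: "'a::real_inner set \<Rightarrow> 'a \<Rightarrow> 'a" where
  "proj W v = (THE p. p \<in> W \<and> (\<forall>w\<in>W. inner (v - p) w = 0))"

definition dictionary :: "'a::real_normed_vector set \<Rightarrow> bool" where
  "dictionary D \<longleftrightarrow> (\<forall>w\<in>D. norm w = 1) \<and> closure (span D) = UNIV"

text \<open>The l1(D) norm of the tuple (psi_1,...,psi_n) (indices 1..n); coefficient vectors
  c_w in R^n are the functions i |-> c w i for i in {1..n}. Value in ennreal; the infimum
  of the empty set is top (= +infinity).\<close>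
definition l1_dict_norm :: "'a::real_normed_vector set \<Rightarrow> nat \<Rightarrow> (nat \<Rightarrow> 'a) \<Rightarrow> ennreal" where
  "l1_dict_norm D n \<psi> = Inf {(\<Sum>\<^sub>\<infinity>w\<in>D. ennreal (sqrt (\<Sum>i=1..n. (c w i)\<^sup>2))) | c.
       countable {w\<in>D. \<exists>i\<in>{1..n}. c w i \<noteq> 0} \<and>
       (\<forall>i\<in>{1..n}. ((\<lambda>w. c w i *\<^sub>R w) has_sum \<psi> i) D)}"

end

theory Submission
  imports Defs
begin


lemma proj_exists:
  fixes B :: "'a::real_inner set"
  assumes "finite B"
  shows "\<exists>p\<in>span B. \<forall>w\<in>span B. inner (v - p) w = 0"
  using assms
proof (induction B arbitrary: v rule: finite_induct)
  case empty
  then show ?case by auto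
next
  case (insert a B)
  obtain p where p: "p \<in> span B" "\<forall>w\<in>span B. inner (v - p) w = 0"
    using insert.IH by blast
  obtain q where q: "q \<in> span B" "\<forall>w\<in>span B. inner (a - q) w = 0"
    using insert.IH by blast
  define g where "g = a - q"
  show ?case
  proof (cases "g = 0")
    case True
    then have "a \<in> span B" using q g_def by simp
    then have "span (insert a B) = span B" by (simp add: span_redundant)
    then show ?thesis using p by auto
  next
    case False
    define c where "c = inner v g / inner g g"
    have gg: "inner g g \<noteq> 0" using False by simp
    have gB: "\<forall>w\<in>span B. inner g w = 0" using q g_def by simp
    have pg: "inner p g = 0" using gB p(1) inner_commute by metis
    have "g \<in> span (insert a B)" unfolding g_def
      by (meson insertI1 q(1) span_base span_diff span_mono subset_insertI subsetD)
    moreover have "p \<in> span (insert a B)" using p(1) span_mono[of B "insert a B"] by auto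
    ultimately have mem: "p + c *\<^sub>R g \<in> span (insert a B)" by (simp add: span_add span_scale)
    have "\<forall>w\<in>span (insert a B). inner (v - (p + c *\<^sub>R g)) w = 0"
    proof
      fix w assume "w \<in> span (insert a B)"
      then obtain t where t: "w - t *\<^sub>R a \<in> span B" unfolding span_insert by auto
      define b where "b = w - t *\<^sub>R a"
      have w: "w = b + t *\<^sub>R (g + q)" using b_def g_def by simp
      have vg: "inner (v - (p + c *\<^sub>R g)) g = 0"
        using gg pg by (simp add: c_def inner_diff_left inner_add_left)
      have bB: "b \<in> span B" using t b_def by simp
      have e: "inner (v - (p + c *\<^sub>R g)) b = inner (v - p) b - c * inner g b"
        by (simp add: inner_diff_left inner_add_left)
      have "inner (v - (p + c *\<^sub>R g)) b = 0"
        unfolding e using p(2) gB bB by simp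
      moreover have e2: "inner (v - (p + c *\<^sub>R g)) q = inner (v - p) q - c * inner g q"
        by (simp add: inner_diff_left inner_add_left)
      moreover have "inner (v - (p + c *\<^sub>R g)) q = 0"
        unfolding e2 using p(2) gB q(1) by simp
      ultimately show "inner (v - (p + c *\<^sub>R g)) w = 0"
        using vg unfolding w by (simp add: inner_add_right)
    qed
    then show ?thesis using mem by blast
  qed
qed

lemma proj_char:
  fixes B :: "'a::real_inner set"
  assumes "finite B"
  shows "proj (span B) v \<in> span B \<and> (\<forall>w\<in>span B. inner (v - proj (span B) v) w = 0)"
proof -
  have "\<exists>!p. p \<in> span B \<and> (\<forall>w\<in>span B. inner (v - p) w = 0)"
  proof -
    obtain p where p: "p \<in> span B" "\<forall>w\<in>span B. inner (v - p) w = 0"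
      using proj_exists[OF assms] by blast
    moreover have "q = p" if "q \<in> span B" "\<forall>w\<in>span B. inner (v - q) w = 0" for q
    proof -
      have d: "p - q \<in> span B" using p(1) that(1) by (simp add: span_diff)
      have "inner (p - q) (p - q) = inner (v - q) (p - q) - inner (v - p) (p - q)"
        by (simp add: inner_diff_left)
      also have "\<dots> = 0" using d p(2) that(2) by simp
      finally show ?thesis by simp
    qed
    ultimately show ?thesis by blast
  qed
  then show ?thesis unfolding proj_def by (rule theI')
qed

lemma proj_min:
  fixes B :: "'a::real_inner set"
  assumes "finite B" "w \<in> span B"
  shows "(norm (v - proj (span B) v))\<^sup>2 \<le> (norm (v - w))\<^sup>2"
proof -
  let ?p = "proj (span B) v"
  have c: "?p \<in> span B" "\<forall>u\<in>span B. inner (v - ?p) u = 0" using proj_char[OF assms(1)] by auto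
  have d: "?p - w \<in> span B" using c(1) assms(2) by (simp add: span_diff)
  have "v - w = (v - ?p) + (?p - w)" by simp
  then have "(norm (v - w))\<^sup>2 = (norm (v - ?p))\<^sup>2 + (norm (?p - w))\<^sup>2"
    using c(2) d by (metis norm_add_Pythagorean orthogonal_def)
  then show ?thesis by simp
qed



lemma ennreal_has_sum:
  fixes f :: "'b \<Rightarrow> real"
  assumes nn: "\<And>x. x \<in> A \<Longrightarrow> 0 \<le> f x"
    and fin: "(\<Sum>\<^sub>\<infinity>x\<in>A. ennreal (f x)) < \<infinity>"
  shows "(f has_sum enn2real (\<Sum>\<^sub>\<infinity>x\<in>A. ennreal (f x))) A"
proof -
  define T where "T = (\<Sum>\<^sub>\<infinity>x\<in>A. ennreal (f x))"
  have sumF: "sum (\<lambda>x. ennreal (f x)) F = ennreal (sum f F)" if "F \<subseteq> A" for F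
    using that nn by (intro sum_ennreal) auto
  have TS: "T = (SUP F\<in>{F. finite F \<and> F \<subseteq> A}. sum (\<lambda>x. ennreal (f x)) F)"
    unfolding T_def by (rule nonneg_infsum_complete) simp
  have le: "ennreal (sum f F) \<le> T" if "finite F" "F \<subseteq> A" for F
  proof -
    have "sum (\<lambda>x. ennreal (f x)) F \<le> T" unfolding TS by (rule SUP_upper) (use that in auto)
    then show ?thesis using sumF[OF that(2)] by simp
  qed
  have le2: "sum f F \<le> enn2real T" if "finite F" "F \<subseteq> A" for F
  proof -
    have "sum f F \<ge> 0" using nn that by (intro sum_nonneg) auto
    moreover have "enn2real (ennreal (sum f F)) \<le> enn2real T"
      by (rule enn2real_mono[OF le[OF that]]) (use fin in \<open>simp add: T_def\<close>)
    ultimately show ?thesis by simp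
  qed
  have summ: "f summable_on A"
    by (rule nonneg_bdd_above_summable_on) (use nn le2 in \<open>auto simp: bdd_above_def\<close>)
  have "ennreal (infsum f A) = (SUP F\<in>{F. finite F \<and> F \<subseteq> A}. (ennreal (sum f F)))"
    by (rule infsum_nonneg_is_SUPREMUM_ennreal[OF summ nn])
  also have "\<dots> = T" unfolding TS by (intro SUP_cong) (auto simp: sumF)
  finally have e: "ennreal (infsum f A) = T" .
  have "infsum f A \<ge> 0" using nn by (rule infsum_nonneg)
  then have "infsum f A = enn2real T" using arg_cong[OF e, of enn2real] by simp
  then show ?thesis using has_sum_infsum[OF summ] T_def by simp
qed

lemma has_sum_finsum:
  fixes f :: "'i \<Rightarrow> 'b \<Rightarrow> real"
  assumes "finite I" "\<And>i. i \<in> I \<Longrightarrow> (f i has_sum s i) A"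
  shows "((\<lambda>x. \<Sum>i\<in>I. f i x) has_sum (\<Sum>i\<in>I. s i)) A"
  using assms
proof (induction I rule: finite_induct)
  case empty then show ?case by (simp add: has_sum_0)
next
  case (insert a I)
  then show ?case by (simp add: has_sum_add)
qed

lemma onb_repr:
  fixes \<phi> :: "nat \<Rightarrow> 'a::real_inner"
  assumes orth: "\<forall>i\<in>{1..n}. \<forall>j\<in>{1..n}. inner (\<phi> i) (\<phi> j) = (if i = j then 1 else 0)"
    and v: "v \<in> span (\<phi> ` {1..n})"
  shows "v = (\<Sum>i=1..n. inner v (\<phi> i) *\<^sub>R \<phi> i)"
  using v
proof (induction rule: span_induct_alt)
  case base then show ?case by simp
next
  case (step c x y)
  then obtain j where j: "j \<in> {1..n}" "x = \<phi> j" by auto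
  have "(\<Sum>i=1..n. inner (c *\<^sub>R x + y) (\<phi> i) *\<^sub>R \<phi> i)
      = c *\<^sub>R (\<Sum>i=1..n. inner (\<phi> j) (\<phi> i) *\<^sub>R \<phi> i) + (\<Sum>i=1..n. inner y (\<phi> i) *\<^sub>R \<phi> i)"
    unfolding j(2) by (simp add: inner_add_left scaleR_add_left sum.distrib scaleR_sum_right)
  also have "(\<Sum>i=1..n. inner (\<phi> j) (\<phi> i) *\<^sub>R \<phi> i) = (\<Sum>i=1..n. (if j = i then \<phi> i else 0))"
    using orth j(1) by (intro sum.cong) auto
  also have "\<dots> = \<phi> j" using j(1) by (simp add: sum.delta)
  finally show ?case using step j by simp
qed

lemma onb_inner:
  fixes \<phi> :: "nat \<Rightarrow> 'a::real_inner"
  assumes orth: "\<forall>i\<in>{1..n}. \<forall>j\<in>{1..n}. inner (\<phi> i) (\<phi> j) = (if i = j then 1 else 0)"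
    and v: "v \<in> span (\<phi> ` {1..n})"
  shows "inner v g = (\<Sum>i=1..n. inner v (\<phi> i) * inner (\<phi> i) g)"
proof -
  have "inner v g = inner (\<Sum>i=1..n. inner v (\<phi> i) *\<^sub>R \<phi> i) g"
    using onb_repr[OF orth v] by simp
  also have "\<dots> = (\<Sum>i=1..n. inner v (\<phi> i) * inner (\<phi> i) g)"
    by (simp add: inner_sum_left)
  finally show ?thesis .
qed

lemma cs_unit:
  fixes a b :: "nat \<Rightarrow> real"
  assumes "(\<Sum>i\<in>I. (a i)\<^sup>2) = 1"
  shows "\<bar>\<Sum>i\<in>I. a i * b i\<bar> \<le> sqrt (\<Sum>i\<in>I. (b i)\<^sup>2)"
proof -
  have "\<bar>\<Sum>i\<in>I. a i * b i\<bar> \<le> (\<Sum>i\<in>I. \<bar>a i\<bar> * \<bar>b i\<bar>)"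
    using sum_abs[of "\<lambda>i. a i * b i" I] by (simp add: abs_mult)
  also have "\<dots> \<le> L2_set a I * L2_set b I" by (rule L2_set_mult_ineq)
  finally show ?thesis using assms by (simp add: L2_set_def)
qed


lemma aux0: "(y::real) \<le> b/4 \<Longrightarrow> 0 \<le> y \<Longrightarrow> 0 \<le> b \<Longrightarrow> y*3 \<le> b" by linarith

lemma aux1:
  fixes x B N :: real
  assumes "0 \<le> x" "x * N \<le> B" "N \<ge> 1" "B > 0"
  shows "(x * B - x\<^sup>2) * (N + 1) \<le> B\<^sup>2"
proof (cases "N \<ge> 2")
  case True
  have "x * N \<le> B*(N-1)"
  proof -
    have "B \<le> B * (N - 1)" using assms True mult_left_mono[of 1 "N-1" B] by simp
    then show ?thesis using assms by linarith
  qed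
  then have "(B - x*N) * (B*(N - 1) - x*N) \<ge> 0"
    using assms by (intro mult_nonneg_nonneg) auto
  then have "N^2 * (x * B - x\<^sup>2) \<le> B^2 * (N - 1)" by (simp add: algebra_simps power2_eq_square)
  moreover have "N + 1 \<ge> 0" using assms by simp
  ultimately have "N^2 * (x * B - x\<^sup>2) * (N+1) \<le> B^2 * (N - 1) * (N+1)"
    by (rule mult_right_mono)
  also have "\<dots> \<le> N^2 * B^2" by (simp add: algebra_simps power2_eq_square)
  finally have "N^2 * ((x * B - x\<^sup>2) * (N + 1)) \<le> N^2 * B^2" by (simp add: mult.assoc)
  then show ?thesis using assms by simp
next
  case False
  have q: "(x * B - x\<^sup>2) \<le> B^2/4" using sum_squares_ge_zero[of "x - B/2" 0]
    by (simp add: power2_eq_square algebra_simps)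
  show ?thesis
  proof (cases "x * B - x\<^sup>2 \<ge> 0")
    case True
    then have "(x * B - x\<^sup>2) * (N+1) \<le> (x * B - x\<^sup>2) * 3" using False by (intro mult_left_mono) auto
    moreover have "(x * B - x\<^sup>2) * 3 \<le> B\<^sup>2" using q True zero_le_power2[of B] by (metis aux0)
    ultimately show ?thesis by (rule order.trans)
  next
    case False
    have "(x * B - x\<^sup>2) * (N + 1) \<le> 0" using False assms by (intro mult_nonpos_nonneg) auto
    then show ?thesis using zero_le_power2[of B] by linarith
  qed
qed
lemma seq_bound:
  fixes a :: "nat \<Rightarrow> real" and B :: real
  assumes B: "B \<ge> 0" and nn: "\<And>k. 0 \<le> a k"
    and rec: "\<And>k. (a k)\<^sup>2 \<le> B * (a k - a (Suc k))"
  shows "a m * (real m + 1) \<le> B"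
proof (cases "B = 0")
  case True
  then have "a m = 0" using rec[of m] by simp
  then show ?thesis using True by simp
next
  case False
  then have Bp: "B > 0" using B by simp
  show ?thesis
  proof (induction m)
    case 0
    have "B * a 1 \<ge> 0" using nn[of 1] Bp by simp
    moreover have "B * (a 0 - a (Suc 0)) = B * a 0 - B * a 1" by (simp add: right_diff_distrib)
    ultimately have "(a 0)\<^sup>2 \<le> B * a 0" using rec[of 0] by linarith
    then have *: "a 0 * a 0 \<le> B * a 0" by (simp add: power2_eq_square)
    have "a 0 \<le> B"
    proof (cases "a 0 = 0")
      case True then show ?thesis using Bp by simp
    next
      case False
      then have "a 0 > 0" using nn[of 0] by simp
      then show ?thesis using * by simp
    qed
    then show ?case by simp
  next
    case (Suc m)
    have h1: "a m * (real m + 1) \<le> B" using Suc.IH .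
    have h2: "B * a (Suc m) \<le> a m * B - (a m)\<^sup>2" using rec[of m] by (simp add: algebra_simps)
    have h3: "(a m * B - (a m)\<^sup>2) * ((real m + 1) + 1) \<le> B\<^sup>2"
      by (rule aux1) (use nn h1 Bp in auto)
    have "B * (a (Suc m) * ((real m + 1) + 1)) \<le> (a m * B - (a m)\<^sup>2) * ((real m + 1) + 1)"
      using h2 by (simp add: mult.assoc[symmetric] mult_right_mono)
    also have "\<dots> \<le> B * B" using h3 by (simp add: power2_eq_square)
    finally have "a (Suc m) * ((real m + 1) + 1) \<le> B" using Bp by simp
    then show ?case by (simp add: add.commute)
  qed
qed


lemma norm_sub_scale:
  fixes a b :: "'a::real_inner"
  shows "(norm (a - c *\<^sub>R b))\<^sup>2 = (norm a)\<^sup>2 - 2*c*inner a b + c\<^sup>2*(norm b)\<^sup>2"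
  unfolding power2_norm_eq_inner by (simp add: inner_diff_left inner_diff_right inner_commute algebra_simps power2_eq_square)

theorem theorem3:
  fixes D :: "'a::{real_inner, complete_space} set"
    and \<phi> :: "nat \<Rightarrow> 'a" and n :: nat and \<kappa> :: real
    and v \<omega> :: "nat \<Rightarrow> 'a" and W :: "nat \<Rightarrow> 'a set" and Vn :: "'a set"
  assumes dict: "dictionary D"
    and Vn_def: "Vn = span (\<phi> ` {1..n})"
    and orthonormal: "\<forall>i\<in>{1..n}. \<forall>j\<in>{1..n}. inner (\<phi> i) (\<phi> j) = (if i = j then 1 else 0)"
    and kappa: "0 < \<kappa>" "\<kappa> < 1"
    and W_def: "\<forall>k. W k = span (\<omega> ` {1..k})"
    and v_max: "\<forall>k\<ge>1. v k \<in> Vn \<and> norm (v k) = 1 \<and>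
        (\<forall>u\<in>Vn. norm u = 1 \<longrightarrow> norm (u - proj (W (k - 1)) u) \<le> norm (v k - proj (W (k - 1)) (v k)))"
    and \<omega>_choice: "\<forall>k\<ge>1. \<omega> k \<in> D \<and>
        \<bar>inner (v k - proj (W (k - 1)) (v k)) (\<omega> k)\<bar> \<ge>
          \<kappa> * (SUP w\<in>D. \<bar>inner (v k - proj (W (k - 1)) (v k)) w\<bar>)"
    and J_fin: "l1_dict_norm D n \<phi> < \<infinity>"
  shows "\<forall>m. (\<Sum>i=1..n. (norm (\<phi> i - proj (W m) (\<phi> i)))\<^sup>2)
           \<le> (real n)\<^sup>2 * (enn2real (l1_dict_norm D n \<phi>))\<^sup>2 / \<kappa>\<^sup>2 * inverse (real m + 1)"
proof
  fix m
  let ?R = "\<lambda>j. (\<Sum>i=1..n. (norm (\<phi> i - proj (W j) (\<phi> i)))\<^sup>2)"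
  let ?J = "l1_dict_norm D n \<phi>"
  have Wfin: "finite (\<omega> ` {1..j})" for j by simp
  have Wc: "proj (W j) x \<in> W j \<and> (\<forall>w\<in>W j. inner (x - proj (W j) x) w = 0)" for j x
    using proj_char[OF Wfin[of j], of x] W_def by simp
  have Wmin: "(norm (x - proj (W j) x))\<^sup>2 \<le> (norm (x - w))\<^sup>2" if "w \<in> W j" for j x w
    using proj_min[OF Wfin[of j], of w x] that W_def by simp
  have Wmono: "W j \<subseteq> W (Suc j)" for j
  proof -
    have "\<omega> ` {1..j} \<subseteq> \<omega> ` {1..Suc j}" by auto
    then show ?thesis using W_def span_mono by metis
  qed
  have Wsub: "subspace (W j)" for j using W_def by simp
  have phiV: "\<phi> i \<in> Vn" if "i \<in> {1..n}" for i using Vn_def that by (simp add: span_base)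
  have phin: "norm (\<phi> i) = 1" if "i \<in> {1..n}" for i
    using orthonormal that by (simp add: norm_eq_sqrt_inner)
  have Dn: "norm w = 1" if "w \<in> D" for w using dict that unfolding dictionary_def by auto
  have core: "sqrt (?R m * (real m + 1)) * \<kappa> \<le> real n * enn2real T"
    if cT: "T = (\<Sum>\<^sub>\<infinity>w\<in>D. ennreal (sqrt (\<Sum>i=1..n. (c w i)\<^sup>2)))" and Tfin: "T < \<infinity>"
      and hs: "\<forall>i\<in>{1..n}. ((\<lambda>w. c w i *\<^sub>R w) has_sum \<phi> i) D" for c T
  proof -
    define S where "S = enn2real T"
    define sq where "sq = (\<lambda>w. sqrt (\<Sum>i=1..n. (c w i)\<^sup>2))"
    have sqhs: "(sq has_sum S) D"
      using ennreal_has_sum[of D sq] cT Tfin unfolding S_def sq_def by (simp add: sum_nonneg)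
    have S0: "S \<ge> 0" unfolding S_def by simp
    have step: "\<kappa>\<^sup>2 * (?R j)\<^sup>2 \<le> (real n)\<^sup>2 * S\<^sup>2 * (?R j - ?R (Suc j))" for j
    proof -
      define vv where "vv = v (Suc j)"
      define om where "om = \<omega> (Suc j)"
      define P where "P = proj (W j)"
      define r where "r = vv - P vv"
      define s where "s = (SUP w\<in>D. \<bar>inner r w\<bar>)"
      define g where "g = om - P om"
      have vv: "vv \<in> Vn" "norm vv = 1" "\<forall>u\<in>Vn. norm u = 1 \<longrightarrow> norm (u - P u) \<le> norm r"
        using v_max[rule_format, of "Suc j"] unfolding vv_def P_def r_def by auto
      have om: "om \<in> D" "\<bar>inner r om\<bar> \<ge> \<kappa> * s"
        using \<omega>_choice[rule_format, of "Suc j"] unfolding om_def s_def r_def vv_def P_def by auto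
      have Pc1: "P x \<in> W j" for x using Wc unfolding P_def by auto
      have Pc2: "inner (x - P x) w = 0" if "w \<in> W j" for x w using Wc that unfolding P_def by auto
      have absle: "\<bar>inner r w\<bar> \<le> norm r" if "w \<in> D" for w
        using Cauchy_Schwarz_ineq2[of r w] Dn[OF that] by simp
      have bdd: "bdd_above ((\<lambda>w. \<bar>inner r w\<bar>) ` D)"
        using absle by (intro bdd_aboveI2[where M="norm r"]) auto
      have sup_le: "\<bar>inner r w\<bar> \<le> s" if "w \<in> D" for w
        unfolding s_def using bdd that by (rule cSUP_upper2) simp
      have s0: "0 \<le> s" using sup_le[OF om(1)] by simp
      have g_orth: "inner g w = 0" if "w \<in> W j" for w using Pc2[OF that, of om] g_def by simp
      have gnorm: "(norm g)\<^sup>2 \<le> 1"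
      proof -
        have "0 \<in> W j" using Wsub by (simp add: subspace_0)
        then have "(norm (om - P om))\<^sup>2 \<le> (norm (om - 0))\<^sup>2" unfolding P_def by (rule Wmin)
        then show ?thesis using Dn[OF om(1)] g_def by simp
      qed
      have tdef: "inner x g = inner (x - P x) g" for x
        using g_orth[OF Pc1[of x]] by (simp add: inner_diff_left inner_diff_right inner_commute)
      have gW: "g \<in> W (Suc j)"
      proof -
        have "om \<in> W (Suc j)" using W_def om_def by (simp add: span_base)
        moreover have "P om \<in> W (Suc j)" using Pc1 Wmono by blast
        ultimately show ?thesis unfolding g_def using Wsub[of "Suc j"] by (simp add: subspace_diff)
      qed
      have dec: "(norm (x - proj (W (Suc j)) x))\<^sup>2 \<le> (norm (x - P x))\<^sup>2 - (inner x g)\<^sup>2" for x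
      proof -
        define t where "t = inner x g"
        have mem: "P x + t *\<^sub>R g \<in> W (Suc j)"
          using Pc1[of x] Wmono gW Wsub[of "Suc j"] by (meson subsetD subspace_add subspace_scale)
        have "(norm (x - proj (W (Suc j)) x))\<^sup>2 \<le> (norm (x - (P x + t *\<^sub>R g)))\<^sup>2" by (rule Wmin[OF mem])
        also have "x - (P x + t *\<^sub>R g) = (x - P x) - t *\<^sub>R g" by simp
        also have "(norm ((x - P x) - t *\<^sub>R g))\<^sup>2 = (norm (x - P x))\<^sup>2 - 2 * t * t + t\<^sup>2 * (norm g)\<^sup>2"
          unfolding norm_sub_scale using tdef[of x] t_def by simp
        also have "\<dots> \<le> (norm (x - P x))\<^sup>2 - t\<^sup>2"
        proof -
          have "t\<^sup>2 * (norm g)\<^sup>2 \<le> t\<^sup>2 * 1" using gnorm by (intro mult_left_mono) auto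
          then show ?thesis by (simp add: power2_eq_square)
        qed
        finally show ?thesis using t_def by simp
      qed
      have Rdec: "?R (Suc j) \<le> ?R j - (\<Sum>i=1..n. (inner (\<phi> i) g)\<^sup>2)"
      proof -
        have "?R (Suc j) \<le> (\<Sum>i=1..n. (norm (\<phi> i - P (\<phi> i)))\<^sup>2 - (inner (\<phi> i) g)\<^sup>2)"
          by (rule sum_mono) (rule dec)
        then show ?thesis by (simp add: sum_subtractf P_def)
      qed
      have vg: "inner vv g = inner r om"
      proof -
        have "inner vv g = inner r g" using tdef[of vv] r_def by simp
        also have "\<dots> = inner r om - inner r (P om)" by (simp add: g_def inner_diff_right)
        also have "inner r (P om) = 0" using Pc2[OF Pc1[of om], of vv] r_def by simp
        finally show ?thesis by simp
      qed
      have Vn_span: "vv \<in> span (\<phi> ` {1..n})" using vv(1) Vn_def by simp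
      define a where "a = (\<lambda>i. inner vv (\<phi> i))"
      have asq: "(\<Sum>i=1..n. (a i)\<^sup>2) = 1"
      proof -
        have "inner vv vv = 1" using vv(2) by (simp add: norm_eq_1)
        then show ?thesis using onb_inner[OF orthonormal Vn_span, of vv]
          by (simp add: a_def power2_eq_square inner_commute)
      qed
      have vg_le: "(inner vv g)\<^sup>2 \<le> (\<Sum>i=1..n. (inner (\<phi> i) g)\<^sup>2)"
      proof -
        have "\<bar>inner vv g\<bar> \<le> sqrt (\<Sum>i=1..n. (inner (\<phi> i) g)\<^sup>2)"
          using onb_inner[OF orthonormal Vn_span, of g] cs_unit[OF asq, of "\<lambda>i. inner (\<phi> i) g"]
          by (simp add: a_def)
        then have "\<bar>inner vv g\<bar>\<^sup>2 \<le> (sqrt (\<Sum>i=1..n. (inner (\<phi> i) g)\<^sup>2))\<^sup>2"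
          by (intro power_mono) auto
        then show ?thesis by (simp add: sum_nonneg)
      qed
      have rr: "(norm r)\<^sup>2 = inner r vv"
      proof -
        have "inner r (P vv) = 0" using Pc2[OF Pc1[of vv], of vv] r_def by simp
        then show ?thesis by (simp add: power2_norm_eq_inner r_def inner_diff_right)
      qed
      have rv_le: "inner r vv \<le> s * S"
      proof -
        have hi: "((\<lambda>w. c w i * inner r w) has_sum inner r (\<phi> i)) D" if "i \<in> {1..n}" for i
          using has_sum_bounded_linear[OF bounded_linear_inner_right[of r] hs[rule_format, OF that]]
          by simp
        have h2: "((\<lambda>w. \<Sum>i=1..n. a i * (c w i * inner r w)) has_sum (\<Sum>i=1..n. a i * inner r (\<phi> i))) D"
          by (rule has_sum_finsum) (simp, rule has_sum_cmult_right, rule hi)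
        have e: "(\<Sum>i=1..n. a i * inner r (\<phi> i)) = inner r vv"
          using onb_inner[OF orthonormal Vn_span, of r] by (simp add: a_def inner_commute)
        have h3: "((\<lambda>w. s * sq w) has_sum s * S) D" using sqhs by (rule has_sum_cmult_right)
        have pw: "(\<Sum>i=1..n. a i * (c w i * inner r w)) \<le> s * sq w" if "w \<in> D" for w
        proof -
          have "(\<Sum>i=1..n. a i * (c w i * inner r w)) = inner r w * (\<Sum>i=1..n. a i * c w i)"
            by (simp add: sum_distrib_left algebra_simps)
          also have "\<dots> \<le> \<bar>inner r w\<bar> * \<bar>\<Sum>i=1..n. a i * c w i\<bar>"
            by (metis abs_ge_self abs_mult)
          also have "\<dots> \<le> s * sq w" using sup_le[OF that] cs_unit[OF asq, of "c w"] unfolding sq_def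
            by (intro mult_mono) auto
          finally show ?thesis .
        qed
        have "(\<Sum>i=1..n. a i * inner r (\<phi> i)) \<le> s * S" using has_sum_mono[OF h2 h3 pw] by simp
        then show ?thesis using e by simp
      qed
      have Rle: "?R j \<le> real n * (norm r)\<^sup>2"
      proof -
        have "?R j \<le> (\<Sum>i=1..n. (norm r)\<^sup>2)"
        proof (rule sum_mono)
          fix i assume i: "i \<in> {1..n}"
          have "norm (\<phi> i - P (\<phi> i)) \<le> norm r" using vv(3) phiV[OF i] phin[OF i] by blast
          then show "(norm (\<phi> i - proj (W j) (\<phi> i)))\<^sup>2 \<le> (norm r)\<^sup>2"
            unfolding P_def by (intro power_mono) auto
        qed
        then show ?thesis by simp
      qed
      have R0: "?R j \<ge> 0" by (simp add: sum_nonneg)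
      have A: "\<kappa> * ?R j \<le> real n * S * \<bar>inner vv g\<bar>"
      proof -
        have "\<kappa> * ?R j \<le> \<kappa> * (real n * (norm r)\<^sup>2)" using Rle kappa by simp
        also have "\<dots> \<le> \<kappa> * (real n * (s * S))" using rr rv_le kappa by (intro mult_left_mono) auto
        also have "\<dots> = real n * S * (\<kappa> * s)" by simp
        also have "\<dots> \<le> real n * S * \<bar>inner vv g\<bar>" using om(2) vg S0 by (intro mult_left_mono) auto
        finally show ?thesis .
      qed
      have "(\<kappa> * ?R j)\<^sup>2 \<le> (real n * S * \<bar>inner vv g\<bar>)\<^sup>2"
        using A R0 kappa by (intro power_mono) auto
      also have "\<dots> = (real n)\<^sup>2 * S\<^sup>2 * (inner vv g)\<^sup>2" by (simp add: power_mult_distrib)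
      also have "\<dots> \<le> (real n)\<^sup>2 * S\<^sup>2 * (?R j - ?R (Suc j))"
        using vg_le Rdec by (intro mult_left_mono) auto
      finally show ?thesis by (simp add: power_mult_distrib)
    qed
    define B where "B = (real n)\<^sup>2 * S\<^sup>2 / \<kappa>\<^sup>2"
    have k2: "\<kappa>\<^sup>2 > 0" using kappa by simp
    have rec: "(?R k)\<^sup>2 \<le> B * (?R k - ?R (Suc k))" for k
    proof -
      have "\<kappa>\<^sup>2 * (?R k)\<^sup>2 \<le> \<kappa>\<^sup>2 * (B * (?R k - ?R (Suc k)))"
        using step[of k] k2 unfolding B_def by simp
      then show ?thesis using k2 by (simp only: mult_le_cancel_left_pos)
    qed
    have "?R m * (real m + 1) \<le> B"
      by (rule seq_bound[of B ?R, OF _ _ rec]) (auto simp: B_def sum_nonneg)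
    then have "?R m * (real m + 1) * \<kappa>\<^sup>2 \<le> (real n * S)\<^sup>2"
      using k2 unfolding B_def by (simp add: pos_le_divide_eq power_mult_distrib)
    then have "sqrt (?R m * (real m + 1) * \<kappa>\<^sup>2) \<le> sqrt ((real n * S)\<^sup>2)"
      by (rule real_sqrt_le_mono)
    then show ?thesis using kappa S0 by (simp add: real_sqrt_mult S_def)
  qed
  show "?R m \<le> (real n)\<^sup>2 * (enn2real ?J)\<^sup>2 / \<kappa>\<^sup>2 * inverse (real m + 1)"
  proof (cases "n = 0")
    case True then show ?thesis by simp
  next
    case False
    then have npos: "real n > 0" by simp
    define jr where "jr = enn2real ?J"
    have jr0: "jr \<ge> 0" unfolding jr_def by simp
    have Jeq: "?J = ennreal jr" using J_fin unfolding jr_def by simp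
    have X: "sqrt (?R m * (real m + 1)) * \<kappa> \<le> real n * jr"
    proof (rule field_le_epsilon)
      fix e :: real assume e: "0 < e"
      define \<epsilon> where "\<epsilon> = e / real n"
      have \<epsilon>0: "\<epsilon> > 0" using e npos unfolding \<epsilon>_def by simp
      have "?J < ennreal (jr + \<epsilon>)" unfolding Jeq using \<epsilon>0 jr0 by (intro ennreal_lessI) auto
      then obtain T where T: "T \<in> {(\<Sum>\<^sub>\<infinity>w\<in>D. ennreal (sqrt (\<Sum>i=1..n. (c w i)\<^sup>2))) | c.
         countable {w\<in>D. \<exists>i\<in>{1..n}. c w i \<noteq> 0} \<and>
         (\<forall>i\<in>{1..n}. ((\<lambda>w. c w i *\<^sub>R w) has_sum \<phi> i) D)}" "T < ennreal (jr + \<epsilon>)"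
        unfolding l1_dict_norm_def by (auto simp: Inf_less_iff)
      then obtain c where c: "T = (\<Sum>\<^sub>\<infinity>w\<in>D. ennreal (sqrt (\<Sum>i=1..n. (c w i)\<^sup>2)))"
        "\<forall>i\<in>{1..n}. ((\<lambda>w. c w i *\<^sub>R w) has_sum \<phi> i) D" by blast
      have lt: "ennreal (jr + \<epsilon>) < top" by simp
      have Tfin: "T < \<infinity>" using T(2) lt unfolding infinity_ennreal_def by (rule less_trans)
      have "enn2real T \<le> enn2real (ennreal (jr + \<epsilon>))"
        using T(2) lt by (intro enn2real_mono) auto
      moreover have "enn2real (ennreal (jr + \<epsilon>)) = jr + \<epsilon>"
        by (rule enn2real_ennreal) (use jr0 \<epsilon>0 in simp)
      ultimately have Tle: "enn2real T \<le> jr + \<epsilon>" by simp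
      have "sqrt (?R m * (real m + 1)) * \<kappa> \<le> real n * enn2real T" by (rule core[OF c(1) Tfin c(2)])
      also have "\<dots> \<le> real n * (jr + \<epsilon>)" using Tle by (intro mult_left_mono) auto
      also have "\<dots> = real n * jr + e" using npos unfolding \<epsilon>_def by (simp add: field_simps)
      finally show "sqrt (?R m * (real m + 1)) * \<kappa> \<le> real n * jr + e" .
    qed
    have Rm0: "?R m * (real m + 1) \<ge> 0" by (simp add: sum_nonneg)
    have "(sqrt (?R m * (real m + 1)) * \<kappa>)\<^sup>2 \<le> (real n * jr)\<^sup>2"
      using X kappa Rm0 by (intro power_mono) auto
    then have Y: "?R m * (real m + 1) * \<kappa>\<^sup>2 \<le> (real n)\<^sup>2 * jr\<^sup>2"
      using Rm0 by (simp add: power_mult_distrib)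
    have k2: "\<kappa>\<^sup>2 > 0" using kappa by simp
    have "?R m \<le> (real n)\<^sup>2 * jr\<^sup>2 / \<kappa>\<^sup>2 / (real m + 1)"
      using Y k2 by (simp add: pos_le_divide_eq mult.commute mult.left_commute)
    then show ?thesis unfolding jr_def by (simp add: divide_inverse)
  qed
qed

end
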